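(* Let $n\ge 2$, $k\ge0$, $\nu_1,\ldots,\nu_n>0$, and let $(j_1,\ldots,j_{n-1})$ be nonnegative integers with $\sum_{\ell=1}^{n-1}j_\ell=k$. Let \[ \psi_{j_1,\ldots,j_{n-1}} = CK_{n}\Big( \big(K_+^{[n-1]}\big)^{j_{n-1}} CK_{n-1}\Big( \cdots \big(K_+^{[3]}\big)^{j_3} CK_{3}\Big( \big(K_+^{[2]}\big)^{j_2} CK_{2}\big( x_1^{j_1}\big)\Big)\cdots\Big)\Big). \] Then for every $\ell\in\{2,\ldots,n\}$, \[ C_{[\ell]}\,\psi_{j_1,\ldots,j_{n-1}}=\lambda^{[\ell]}_{j_1,\ldots,j_{n-1}}\,\psi_{j_1,\ldots,j_{n-1}},\qquad \lambda^{[\ell]}_{j_1,\ldots,j_{n-1}}=\Big(\sum_{i=1}^{\ell-1}j_i+\sum_{i=1}^{\ell}\nu_i\Big)\Big(-1+\sum_{i=1}^{\ell-1}j_i+\sum_{i=1}^{\ell}\nu_i\Big). \]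
   Context: For a subset $B\subset[n]=\{1,\ldots,n\}$ define the differential operators on $\mathbb{R}[x_1,\ldots,x_n]$: $K_-^B=\sum_{j\in B}\partial_{x_j}$, $K_+^B=\sum_{j\in B}(x_j^2\partial_{x_j}+2\nu_jx_j)$, $K_0^B=\sum_{j\in B}x_j\partial_{x_j}+\sum_{j\in B}\nu_j$, and $C_B=(K_0^B)^2-K_0^B-K_+^BK_-^B$. Write $[m]=\{1,\ldots,m\}$. For $2\le m\le n$, $CK_m$ sends a polynomial $p(x_1,\ldots,x_{m-1})$ to $p(x_1-x_m,\ldots,x_{m-1}-x_m)$; $K_+^{[m]}$ acts on polynomials in $x_1,\ldots,x_m$. The resulting $\psi$ is regarded as a polynomial in $x_1,\ldots,x_n$. *)

theory Defs
  imports "HOL-Analysis.Analysis"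
begin

text \<open>Polynomials in x_1,...,x_n are represented by their polynomial functions
  (nat => real) => real (only coordinates 1..n matter).  Over the reals, equality
  of polynomials is equality of the associated functions.\<close>

type_synonym pfun = "(nat \<Rightarrow> real) \<Rightarrow> real"

definition pd :: "nat \<Rightarrow> pfun \<Rightarrow> pfun" where
  "pd j f = (\<lambda>x. deriv (\<lambda>t. f (x(j := t))) (x j))"

definition Kminus :: "nat set \<Rightarrow> pfun \<Rightarrow> pfun" where
  "Kminus B f = (\<lambda>x. \<Sum>j\<in>B. pd j f x)"

definition Kplus :: "(nat \<Rightarrow> real) \<Rightarrow> nat set \<Rightarrow> pfun \<Rightarrow> pfun" where
  "Kplus \<nu> B f = (\<lambda>x. \<Sum>j\<in>B. (x j)^2 * pd j f x + 2 * \<nu> j * x j * f x)"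

definition K0 :: "(nat \<Rightarrow> real) \<Rightarrow> nat set \<Rightarrow> pfun \<Rightarrow> pfun" where
  "K0 \<nu> B f = (\<lambda>x. (\<Sum>j\<in>B. x j * pd j f x) + (\<Sum>j\<in>B. \<nu> j) * f x)"

definition Cas :: "(nat \<Rightarrow> real) \<Rightarrow> nat set \<Rightarrow> pfun \<Rightarrow> pfun" where
  "Cas \<nu> B f = (\<lambda>x. K0 \<nu> B (K0 \<nu> B f) x - K0 \<nu> B f x - Kplus \<nu> B (Kminus B f) x)"

definition CK :: "nat \<Rightarrow> pfun \<Rightarrow> pfun" where
  "CK m p = (\<lambda>x. p (\<lambda>i. if 1 \<le> i \<and> i \<le> m - 1 then x i - x m else x i))"

text \<open>psiS nu j r is the nested expression ending with CK_(r+2); psi = psiS nu j (n-2).\<close>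
primrec psiS :: "(nat \<Rightarrow> real) \<Rightarrow> (nat \<Rightarrow> nat) \<Rightarrow> nat \<Rightarrow> pfun" where
  "psiS \<nu> j 0 = CK 2 (\<lambda>x. (x 1) ^ (j 1))"
| "psiS \<nu> j (Suc r) = CK (r + 3) ((Kplus \<nu> {1..r+2} ^^ (j (r+2))) (psiS \<nu> j r))"

end

theory Submission
  imports Defs
begin


inductive_set P :: "pfun set" where
  P_const: "(\<lambda>x. c) \<in> P"
| P_var: "(\<lambda>x. x i) \<in> P"
| P_add: "f \<in> P \<Longrightarrow> g \<in> P \<Longrightarrow> (\<lambda>x. f x + g x) \<in> P"
| P_diff: "f \<in> P \<Longrightarrow> g \<in> P \<Longrightarrow> (\<lambda>x. f x - g x) \<in> P"
| P_mul: "f \<in> P \<Longrightarrow> g \<in> P \<Longrightarrow> (\<lambda>x. f x * g x) \<in> P"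

declare P.intros[simp, intro]

lemma P_diffble: "f \<in> P \<Longrightarrow> (\<lambda>t. f (x(j:=t))) field_differentiable (at t)"
proof (induction f rule: P.induct)
  case (P_var i)
  then show ?case by (cases "i = j") auto
qed (auto intro!: derivative_intros)

lemma pd_const[simp]: "pd j (\<lambda>x. c) = (\<lambda>x. 0)"
  by (simp add: pd_def)

lemma pd_var[simp]: "pd j (\<lambda>x. x i) = (\<lambda>x. if i = j then 1 else 0)"
  by (cases "i = j") (auto simp: pd_def)

lemma pd_add[simp]: "f \<in> P \<Longrightarrow> g \<in> P \<Longrightarrow> pd j (\<lambda>x. f x + g x) = (\<lambda>x. pd j f x + pd j g x)"
  unfolding pd_def by (rule ext) (simp add: P_diffble)

lemma pd_diff[simp]: "f \<in> P \<Longrightarrow> g \<in> P \<Longrightarrow> pd j (\<lambda>x. f x - g x) = (\<lambda>x. pd j f x - pd j g x)"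
  unfolding pd_def by (rule ext) (simp add: P_diffble)

lemma pd_mul[simp]: "f \<in> P \<Longrightarrow> g \<in> P \<Longrightarrow> pd j (\<lambda>x. f x * g x) = (\<lambda>x. pd j f x * g x + f x * pd j g x)"
  unfolding pd_def by (rule ext) (simp add: P_diffble)

lemma P_pd[simp, intro]: "f \<in> P \<Longrightarrow> pd j f \<in> P"
  by (induction f rule: P.induct) auto

lemma pd_comm: "f \<in> P \<Longrightarrow> pd i (pd j f) = pd j (pd i f)"
  by (induction f rule: P.induct) (auto simp: algebra_simps)

lemma P_sum[simp, intro]: "(\<And>k. k \<in> B \<Longrightarrow> F k \<in> P) \<Longrightarrow> (\<lambda>x. \<Sum>k\<in>B. F k x) \<in> P"
proof (induction B rule: infinite_finite_induct)
  case (insert a B)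
  then have "(\<lambda>x. F a x + (\<Sum>k\<in>B. F k x)) \<in> P" by (intro P_add) auto
  then show ?case using insert by simp
qed auto

lemma pd_sum[simp]: "(\<And>k. k \<in> B \<Longrightarrow> F k \<in> P) \<Longrightarrow> pd j (\<lambda>x. \<Sum>k\<in>B. F k x) = (\<lambda>x. \<Sum>k\<in>B. pd j (F k) x)"
proof (induction B rule: infinite_finite_induct)
  case (insert a B)
  have "pd j (\<lambda>x. F a x + (\<Sum>k\<in>B. F k x)) = (\<lambda>x. pd j (F a) x + pd j (\<lambda>x. \<Sum>k\<in>B. F k x) x)"
    using insert by (intro pd_add) auto
  then show ?case using insert by simp
qed auto

lemma P_pow[simp, intro]: "f \<in> P \<Longrightarrow> (\<lambda>x. f x ^ n) \<in> P"
proof (induction n)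
  case 0 then show ?case by simp
next
  case (Suc n)
  then have "(\<lambda>x. f x * f x ^ n) \<in> P" by auto
  then show ?case by simp
qed

lemma pd_pow: "f \<in> P \<Longrightarrow> pd j (\<lambda>x. f x ^ n) = (\<lambda>x. real n * f x ^ (n - 1) * pd j f x)"
proof (induction n)
  case 0 then show ?case by simp
next
  case (Suc n)
  have "pd j (\<lambda>x. f x ^ Suc n) = pd j (\<lambda>x. f x * f x ^ n)" by simp
  also have "\<dots> = (\<lambda>x. pd j f x * f x ^ n + f x * pd j (\<lambda>x. f x ^ n) x)"
    using Suc by (intro pd_mul) auto
  also have "\<dots> = (\<lambda>x. real (Suc n) * f x ^ (Suc n - 1) * pd j f x)"
    using Suc by (cases n) (auto simp: algebra_simps)
  finally show ?case .
qed

definition kp :: "(nat \<Rightarrow> real) \<Rightarrow> nat \<Rightarrow> pfun \<Rightarrow> pfun" where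
  "kp \<nu> j f = (\<lambda>x. (x j)^2 * pd j f x + 2 * \<nu> j * x j * f x)"
definition ee :: "nat \<Rightarrow> pfun \<Rightarrow> pfun" where
  "ee j f = (\<lambda>x. x j * pd j f x)"

lemma Kplus_alt: "Kplus \<nu> B f = (\<lambda>x. \<Sum>j\<in>B. kp \<nu> j f x)"
  by (simp add: Kplus_def kp_def)
lemma K0_alt: "K0 \<nu> B f = (\<lambda>x. (\<Sum>j\<in>B. ee j f x) + (\<Sum>j\<in>B. \<nu> j) * f x)"
  by (simp add: K0_def ee_def)

lemma P_kp[simp,intro]: "f \<in> P \<Longrightarrow> kp \<nu> j f \<in> P"
  unfolding kp_def by (intro P.intros P_pow P_pd) auto
lemma P_ee[simp,intro]: "f \<in> P \<Longrightarrow> ee j f \<in> P"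
  unfolding ee_def by (intro P.intros P_pow P_pd) auto
lemma P_Kplus[simp,intro]: "f \<in> P \<Longrightarrow> Kplus \<nu> B f \<in> P"
  unfolding Kplus_alt by auto
lemma P_K0[simp,intro]: "f \<in> P \<Longrightarrow> K0 \<nu> B f \<in> P"
  unfolding K0_alt by (intro P.intros P_sum) auto
lemma P_Kminus[simp,intro]: "f \<in> P \<Longrightarrow> Kminus B f \<in> P"
  unfolding Kminus_def by auto
lemma P_Cas[simp,intro]: "f \<in> P \<Longrightarrow> Cas \<nu> B f \<in> P"
  unfolding Cas_def by (intro P.intros) auto
lemma P_Kplus_pow[simp,intro]: "f \<in> P \<Longrightarrow> (Kplus \<nu> B ^^ n) f \<in> P"
  by (induction n) auto

lemma pd_var_sq[simp]: "pd i (\<lambda>x. (x j)^2) = (\<lambda>x. if j = i then 2 * x j else 0)"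
  by (simp add: pd_pow)

lemma C1: "f \<in> P \<Longrightarrow> pd i (kp \<nu> j f) = (\<lambda>x. kp \<nu> j (pd i f) x + (if i = j then 2 * x j * pd j f x + 2 * \<nu> j * f x else 0))"
  unfolding kp_def by (rule ext) (auto simp: pd_comm algebra_simps)
lemma C2: "f \<in> P \<Longrightarrow> ee i (kp \<nu> j f) = (\<lambda>x. kp \<nu> j (ee i f) x + (if i = j then kp \<nu> j f x else 0))"
  unfolding kp_def ee_def by (rule ext) (auto simp: pd_comm algebra_simps power2_eq_square)
lemma C3: "f \<in> P \<Longrightarrow> kp \<nu> i (kp \<nu> j f) = kp \<nu> j (kp \<nu> i f)"
  unfolding kp_def by (rule ext) (auto simp: pd_comm algebra_simps power2_eq_square)
lemma C4: "f \<in> P \<Longrightarrow> pd i (ee j f) = (\<lambda>x. ee j (pd i f) x + (if i = j then pd j f x else 0))"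
  unfolding ee_def by (rule ext) (auto simp: pd_comm algebra_simps)

lemma kp_add[simp]: "f \<in> P \<Longrightarrow> g \<in> P \<Longrightarrow> kp \<nu> j (\<lambda>x. f x + g x) = (\<lambda>x. kp \<nu> j f x + kp \<nu> j g x)"
  unfolding kp_def by (rule ext) (simp add: algebra_simps sum.distrib)
lemma kp_diff[simp]: "f \<in> P \<Longrightarrow> g \<in> P \<Longrightarrow> kp \<nu> j (\<lambda>x. f x - g x) = (\<lambda>x. kp \<nu> j f x - kp \<nu> j g x)"
  unfolding kp_def by (rule ext) (simp add: algebra_simps sum_subtractf)
lemma kp_cmult[simp]: "f \<in> P \<Longrightarrow> kp \<nu> j (\<lambda>x. c * f x) = (\<lambda>x. c * kp \<nu> j f x)"
  unfolding kp_def by (rule ext) (simp add: algebra_simps sum_distrib_left)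
lemma kp_zero[simp]: "kp \<nu> j (\<lambda>x. 0) = (\<lambda>x. 0)"
  unfolding kp_def by (rule ext) simp
lemma kp_sum[simp]: "(\<And>k. k \<in> S \<Longrightarrow> F k \<in> P) \<Longrightarrow> kp \<nu> j (\<lambda>x. \<Sum>k\<in>S. F k x) = (\<lambda>x. \<Sum>k\<in>S. kp \<nu> j (F k) x)"
  unfolding kp_def by (rule ext) (simp add: algebra_simps sum_distrib_left sum.distrib sum.swap[where A=S])

lemma ee_add[simp]: "f \<in> P \<Longrightarrow> g \<in> P \<Longrightarrow> ee j (\<lambda>x. f x + g x) = (\<lambda>x. ee j f x + ee j g x)"
  unfolding ee_def by (rule ext) (simp add: algebra_simps sum.distrib)
lemma ee_diff[simp]: "f \<in> P \<Longrightarrow> g \<in> P \<Longrightarrow> ee j (\<lambda>x. f x - g x) = (\<lambda>x. ee j f x - ee j g x)"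
  unfolding ee_def by (rule ext) (simp add: algebra_simps sum_subtractf)
lemma ee_cmult[simp]: "f \<in> P \<Longrightarrow> ee j (\<lambda>x. c * f x) = (\<lambda>x. c * ee j f x)"
  unfolding ee_def by (rule ext) (simp add: algebra_simps sum_distrib_left)
lemma ee_zero[simp]: "ee j (\<lambda>x. 0) = (\<lambda>x. 0)"
  unfolding ee_def by (rule ext) simp
lemma ee_sum[simp]: "(\<And>k. k \<in> S \<Longrightarrow> F k \<in> P) \<Longrightarrow> ee j (\<lambda>x. \<Sum>k\<in>S. F k x) = (\<lambda>x. \<Sum>k\<in>S. ee j (F k) x)"
  unfolding ee_def by (rule ext) (simp add: algebra_simps sum_distrib_left sum.distrib sum.swap[where A=S])

lemma Kplus_add[simp]: "f \<in> P \<Longrightarrow> g \<in> P \<Longrightarrow> Kplus \<nu> B (\<lambda>x. f x + g x) = (\<lambda>x. Kplus \<nu> B f x + Kplus \<nu> B g x)"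
  unfolding Kplus_def by (rule ext) (simp add: algebra_simps sum.distrib)
lemma Kplus_diff[simp]: "f \<in> P \<Longrightarrow> g \<in> P \<Longrightarrow> Kplus \<nu> B (\<lambda>x. f x - g x) = (\<lambda>x. Kplus \<nu> B f x - Kplus \<nu> B g x)"
  unfolding Kplus_def by (rule ext) (simp add: algebra_simps sum_subtractf)
lemma Kplus_cmult[simp]: "f \<in> P \<Longrightarrow> Kplus \<nu> B (\<lambda>x. c * f x) = (\<lambda>x. c * Kplus \<nu> B f x)"
  unfolding Kplus_def by (rule ext) (simp add: algebra_simps sum_distrib_left)
lemma Kplus_zero[simp]: "Kplus \<nu> B (\<lambda>x. 0) = (\<lambda>x. 0)"
  unfolding Kplus_def by (rule ext) simp
lemma Kplus_sum[simp]: "(\<And>k. k \<in> S \<Longrightarrow> F k \<in> P) \<Longrightarrow> Kplus \<nu> B (\<lambda>x. \<Sum>k\<in>S. F k x) = (\<lambda>x. \<Sum>k\<in>S. Kplus \<nu> B (F k) x)"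
  unfolding Kplus_def by (rule ext) (simp add: algebra_simps sum_distrib_left sum.distrib sum.swap[where A=S])

lemma K0_add[simp]: "f \<in> P \<Longrightarrow> g \<in> P \<Longrightarrow> K0 \<nu> B (\<lambda>x. f x + g x) = (\<lambda>x. K0 \<nu> B f x + K0 \<nu> B g x)"
  unfolding K0_def by (rule ext) (simp add: algebra_simps sum.distrib)
lemma K0_diff[simp]: "f \<in> P \<Longrightarrow> g \<in> P \<Longrightarrow> K0 \<nu> B (\<lambda>x. f x - g x) = (\<lambda>x. K0 \<nu> B f x - K0 \<nu> B g x)"
  unfolding K0_def by (rule ext) (simp add: algebra_simps sum_subtractf)
lemma K0_cmult[simp]: "f \<in> P \<Longrightarrow> K0 \<nu> B (\<lambda>x. c * f x) = (\<lambda>x. c * K0 \<nu> B f x)"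
  unfolding K0_def by (rule ext) (simp add: algebra_simps sum_distrib_left)
lemma K0_zero[simp]: "K0 \<nu> B (\<lambda>x. 0) = (\<lambda>x. 0)"
  unfolding K0_def by (rule ext) simp
lemma K0_sum[simp]: "(\<And>k. k \<in> S \<Longrightarrow> F k \<in> P) \<Longrightarrow> K0 \<nu> B (\<lambda>x. \<Sum>k\<in>S. F k x) = (\<lambda>x. \<Sum>k\<in>S. K0 \<nu> B (F k) x)"
  unfolding K0_def by (rule ext) (simp add: algebra_simps sum_distrib_left sum.distrib sum.swap[where A=S])

lemma Kminus_add[simp]: "f \<in> P \<Longrightarrow> g \<in> P \<Longrightarrow> Kminus B (\<lambda>x. f x + g x) = (\<lambda>x. Kminus B f x + Kminus B g x)"
  unfolding Kminus_def by (rule ext) (simp add: algebra_simps sum.distrib)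
lemma Kminus_diff[simp]: "f \<in> P \<Longrightarrow> g \<in> P \<Longrightarrow> Kminus B (\<lambda>x. f x - g x) = (\<lambda>x. Kminus B f x - Kminus B g x)"
  unfolding Kminus_def by (rule ext) (simp add: algebra_simps sum_subtractf)
lemma Kminus_cmult[simp]: "f \<in> P \<Longrightarrow> Kminus B (\<lambda>x. c * f x) = (\<lambda>x. c * Kminus B f x)"
  unfolding Kminus_def by (rule ext) (simp add: algebra_simps sum_distrib_left)
lemma Kminus_zero[simp]: "Kminus B (\<lambda>x. 0) = (\<lambda>x. 0)"
  unfolding Kminus_def by (rule ext) simp
lemma Kminus_sum[simp]: "(\<And>k. k \<in> S \<Longrightarrow> F k \<in> P) \<Longrightarrow> Kminus B (\<lambda>x. \<Sum>k\<in>S. F k x) = (\<lambda>x. \<Sum>k\<in>S. Kminus B (F k) x)"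
  unfolding Kminus_def by (rule ext) (simp add: algebra_simps sum_distrib_left sum.distrib sum.swap[where A=S])

lemma pd_cmult[simp]: "f \<in> P \<Longrightarrow> pd j (\<lambda>x. c * f x) = (\<lambda>x. c * pd j f x)"
  by simp

lemma delta_sum: "B \<subseteq> B' \<Longrightarrow> (\<Sum>i\<in>B. if i \<in> B' then g i else 0) = (\<Sum>j\<in>B. (g j :: real))"
  by (auto intro!: sum.cong) 

lemma L1: assumes "f \<in> P" "finite B" "finite B'" "B \<subseteq> B'"
  shows "K0 \<nu> B (Kplus \<nu> B' f) = (\<lambda>x. Kplus \<nu> B' (K0 \<nu> B f) x + Kplus \<nu> B f x)"
proof (rule ext)
  fix x
  have "K0 \<nu> B (Kplus \<nu> B' f) x = (\<Sum>i\<in>B. \<Sum>j\<in>B'. kp \<nu> j (ee i f) x + (if i = j then kp \<nu> j f x else 0))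
     + (\<Sum>j\<in>B. \<nu> j) * (\<Sum>j\<in>B'. kp \<nu> j f x)"
    using assms by (simp add: K0_alt Kplus_alt C2)
  also have "\<dots> = (\<Sum>j\<in>B'. \<Sum>i\<in>B. kp \<nu> j (ee i f) x) + (\<Sum>j\<in>B. \<nu> j) * (\<Sum>j\<in>B'. kp \<nu> j f x) + (\<Sum>j\<in>B. kp \<nu> j f x)"
    using assms by (simp add: sum.distrib delta_sum sum.swap[where A=B])
  also have "\<dots> = Kplus \<nu> B' (K0 \<nu> B f) x + Kplus \<nu> B f x"
    using assms by (simp add: K0_alt Kplus_alt sum.distrib sum_distrib_left)
  finally show "K0 \<nu> B (Kplus \<nu> B' f) x = Kplus \<nu> B' (K0 \<nu> B f) x + Kplus \<nu> B f x" .
qed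

lemma L2: assumes "f \<in> P" "finite B" "finite B'" "B \<subseteq> B'"
  shows "Kminus B (Kplus \<nu> B' f) = (\<lambda>x. Kplus \<nu> B' (Kminus B f) x + 2 * K0 \<nu> B f x)"
proof (rule ext)
  fix x
  have "Kminus B (Kplus \<nu> B' f) x = (\<Sum>i\<in>B. \<Sum>j\<in>B'. kp \<nu> j (pd i f) x + (if i = j then 2 * x j * pd j f x + 2 * \<nu> j * f x else 0))"
    using assms by (simp add: Kminus_def Kplus_alt C1)
  also have "\<dots> = (\<Sum>j\<in>B'. \<Sum>i\<in>B. kp \<nu> j (pd i f) x) + (\<Sum>j\<in>B. 2 * x j * pd j f x + 2 * \<nu> j * f x)"
    using assms apply (simp add: sum.distrib delta_sum)
    apply (subst sum.swap) apply (rule refl) done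
  also have "\<dots> = Kplus \<nu> B' (Kminus B f) x + 2 * K0 \<nu> B f x"
    using assms by (simp add: K0_alt ee_def Kminus_def Kplus_alt sum.distrib sum_distrib_left sum_distrib_right mult.assoc)
  finally show "Kminus B (Kplus \<nu> B' f) x = Kplus \<nu> B' (Kminus B f) x + 2 * K0 \<nu> B f x" .
qed

lemma L3: assumes "f \<in> P"
  shows "Kplus \<nu> B (Kplus \<nu> B' f) = Kplus \<nu> B' (Kplus \<nu> B f)"
proof (rule ext)
  fix x
  have "Kplus \<nu> B (Kplus \<nu> B' f) x = (\<Sum>i\<in>B. \<Sum>j\<in>B'. kp \<nu> i (kp \<nu> j f) x)"
    using assms by (simp add: Kplus_alt)
  also have "\<dots> = (\<Sum>j\<in>B'. \<Sum>i\<in>B. kp \<nu> j (kp \<nu> i f) x)"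
    by (subst sum.swap) (simp only: C3[OF assms])
  also have "\<dots> = Kplus \<nu> B' (Kplus \<nu> B f) x"
    using assms by (simp add: Kplus_alt)
  finally show "Kplus \<nu> B (Kplus \<nu> B' f) x = Kplus \<nu> B' (Kplus \<nu> B f) x" .
qed
lemma L4: assumes "f \<in> P" "finite B"
  shows "Kminus B (K0 \<nu> B f) = (\<lambda>x. K0 \<nu> B (Kminus B f) x + Kminus B f x)"
proof (rule ext)
  fix x
  have "Kminus B (K0 \<nu> B f) x = (\<Sum>i\<in>B. (\<Sum>j\<in>B. ee j (pd i f) x + (if i = j then pd j f x else 0)) + (\<Sum>j\<in>B. \<nu> j) * pd i f x)"
    using assms by (simp add: Kminus_def K0_alt C4)
  also have "\<dots> = (\<Sum>j\<in>B. \<Sum>i\<in>B. ee j (pd i f) x) + (\<Sum>j\<in>B. \<nu> j) * (\<Sum>i\<in>B. pd i f x) + (\<Sum>j\<in>B. pd j f x)"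
    using assms apply (simp add: sum.distrib delta_sum sum_distrib_left)
    apply (subst sum.swap) apply (rule refl) done
  also have "\<dots> = K0 \<nu> B (Kminus B f) x + Kminus B f x"
    using assms by (simp add: K0_alt Kminus_def)
  finally show "Kminus B (K0 \<nu> B f) x = K0 \<nu> B (Kminus B f) x + Kminus B f x" .
qed
lemma pd_Kplus_out: assumes "f \<in> P" "p \<notin> B"
  shows "pd p (Kplus \<nu> B f) = Kplus \<nu> B (pd p f)"
  using assms by (auto simp: Kplus_alt C1 intro!: ext sum.cong)



lemma Cas_Kplus: assumes "f \<in> P" "finite B" "finite B'" "B \<subseteq> B'"
  shows "Cas \<nu> B (Kplus \<nu> B' f) = Kplus \<nu> B' (Cas \<nu> B f)"
  using assms by (simp add: Cas_def L1 L2 L3 algebra_simps)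

lemma CK_add[simp]: "CK m (\<lambda>x. f x + g x) = (\<lambda>x. CK m f x + CK m g x)" by (simp add: CK_def)
lemma CK_diff[simp]: "CK m (\<lambda>x. f x - g x) = (\<lambda>x. CK m f x - CK m g x)" by (simp add: CK_def)
lemma CK_mul[simp]: "CK m (\<lambda>x. f x * g x) = (\<lambda>x. CK m f x * CK m g x)" by (simp add: CK_def)
lemma CK_const[simp]: "CK m (\<lambda>x. c) = (\<lambda>x. c)" by (simp add: CK_def)
lemma CK_var: "CK m (\<lambda>x. x i) = (if 1 \<le> i \<and> i \<le> m - 1 then (\<lambda>x. x i - x m) else (\<lambda>x. x i))"
  by (auto simp: CK_def)
lemma CK_sum[simp]: "CK m (\<lambda>x. \<Sum>k\<in>S. F k x) = (\<lambda>x. \<Sum>k\<in>S. CK m (F k) x)" by (simp add: CK_def)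

lemma P_CK[simp,intro]: "f \<in> P \<Longrightarrow> CK m f \<in> P"
  by (induction f rule: P.induct) (auto simp: CK_var)

lemma CK_chain: "f \<in> P \<Longrightarrow> pd p (CK m f) = (\<lambda>x. CK m (pd p f) x - (if p = m then (\<Sum>i\<in>{1..m-1}. CK m (pd i f) x) else 0))"
proof (induction f rule: P.induct)
  case (P_var i)
  show ?case
  proof (cases "1 \<le> i \<and> i \<le> m - 1")
    case True
    then have "i \<noteq> m" by auto
    with True show ?thesis by (auto simp: CK_var sum.delta)
  next
    case False
    then show ?thesis by (auto simp: CK_var)
  qed
next
  case (P_mul f g)
  then show ?case by (auto simp: algebra_simps sum_distrib_left sum_distrib_right sum_subtractf sum.distrib intro!: ext)
qed (auto simp: sum_subtractf sum.distrib intro!: ext)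


lemma pd_CK_in: "f \<in> P \<Longrightarrow> p \<noteq> m \<Longrightarrow> pd p (CK m f) = CK m (pd p f)"
  by (simp add: CK_chain)

lemma CK_xi: "1 \<le> i \<Longrightarrow> i \<le> m - 1 \<Longrightarrow> CK m (\<lambda>x. x i) x = x i - x m"
  by (simp add: CK_def)
lemma CK_pow[simp]: "CK m (\<lambda>x. f x ^ n) = (\<lambda>x. CK m f x ^ n)"
  by (simp add: CK_def)

lemma T1: assumes "q \<in> P" "B \<subseteq> {1..m-1}" "m \<ge> 1"
  shows "Kminus B (CK m q) = CK m (Kminus B q)"
proof -
  have "\<And>p. p \<in> B \<Longrightarrow> p \<noteq> m" using assms by auto
  then show ?thesis using assms unfolding Kminus_def by (auto simp: pd_CK_in intro!: ext sum.cong)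
qed

lemma T2: assumes "q \<in> P" "B \<subseteq> {1..m-1}" "m \<ge> 1"
  shows "K0 \<nu> B (CK m q) = (\<lambda>x. CK m (K0 \<nu> B q) x + x m * CK m (Kminus B q) x)"
proof (rule ext)
  fix x
  have m: "\<And>p. p \<in> B \<Longrightarrow> p \<noteq> m \<and> 1 \<le> p \<and> p \<le> m - 1" using assms by auto
  have "K0 \<nu> B (CK m q) x = (\<Sum>i\<in>B. x i * CK m (pd i q) x) + (\<Sum>j\<in>B. \<nu> j) * CK m q x"
    using m assms by (simp add: K0_alt ee_def pd_CK_in)
  also have "\<dots> = (\<Sum>i\<in>B. (x i - x m) * CK m (pd i q) x) + (\<Sum>j\<in>B. \<nu> j) * CK m q x + x m * (\<Sum>i\<in>B. CK m (pd i q) x)"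
    by (simp add: algebra_simps sum.distrib sum_distrib_left sum_subtractf)
  also have "\<dots> = CK m (K0 \<nu> B q) x + x m * CK m (Kminus B q) x"
    using m assms by (simp add: K0_alt ee_def Kminus_def CK_xi cong: sum.cong)
  finally show "K0 \<nu> B (CK m q) x = CK m (K0 \<nu> B q) x + x m * CK m (Kminus B q) x" .
qed

lemma T3: assumes "q \<in> P" "B \<subseteq> {1..m-1}" "m \<ge> 1"
  shows "Kplus \<nu> B (CK m q) = (\<lambda>x. CK m (Kplus \<nu> B q) x + 2 * x m * CK m (K0 \<nu> B q) x + (x m)^2 * CK m (Kminus B q) x)"
proof (rule ext)
  fix x
  have m: "\<And>p. p \<in> B \<Longrightarrow> p \<noteq> m \<and> 1 \<le> p \<and> p \<le> m - 1" using assms by auto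
  have "Kplus \<nu> B (CK m q) x = (\<Sum>i\<in>B. (x i)^2 * CK m (pd i q) x + 2 * \<nu> i * x i * CK m q x)"
    using m assms by (simp add: Kplus_alt kp_def pd_CK_in)
  also have "\<dots> = (\<Sum>i\<in>B. (x i - x m)^2 * CK m (pd i q) x + 2 * \<nu> i * (x i - x m) * CK m q x)
     + 2 * x m * ((\<Sum>i\<in>B. (x i - x m) * CK m (pd i q) x) + (\<Sum>j\<in>B. \<nu> j) * CK m q x)
     + (x m)^2 * (\<Sum>i\<in>B. CK m (pd i q) x)"
    by (simp add: algebra_simps power2_eq_square sum.distrib sum_distrib_left sum_distrib_right sum_subtractf)
  also have "\<dots> = CK m (Kplus \<nu> B q) x + 2 * x m * CK m (K0 \<nu> B q) x + (x m)^2 * CK m (Kminus B q) x"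
    using m assms by (simp add: K0_alt ee_def Kminus_def Kplus_alt kp_def CK_xi cong: sum.cong)
  finally show "Kplus \<nu> B (CK m q) x = CK m (Kplus \<nu> B q) x + 2 * x m * CK m (K0 \<nu> B q) x + (x m)^2 * CK m (Kminus B q) x" .
qed

lemma xm_K0: assumes "h \<in> P" "m \<notin> B"
  shows "K0 \<nu> B (\<lambda>x. x m * h x) = (\<lambda>x. x m * K0 \<nu> B h x)"
proof -
  have "\<And>i. i \<in> B \<Longrightarrow> m \<noteq> i" using assms by auto
  then show ?thesis using assms unfolding K0_alt ee_def
    by (auto simp: algebra_simps sum_distrib_left intro!: ext sum.cong)
qed

lemma xm_Km: assumes "h \<in> P" "m \<notin> B"
  shows "Kminus B (\<lambda>x. x m * h x) = (\<lambda>x. x m * Kminus B h x)"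
proof -
  have "\<And>i. i \<in> B \<Longrightarrow> m \<noteq> i" using assms by auto
  then show ?thesis using assms unfolding Kminus_def
    by (auto simp: algebra_simps sum_distrib_left intro!: ext sum.cong)
qed

lemma Cas_CK: assumes "q \<in> P" "finite B" "B \<subseteq> {1..m-1}" "m \<ge> 1"
  shows "Cas \<nu> B (CK m q) = CK m (Cas \<nu> B q)"
proof -
  have mB: "m \<notin> B" using assms by auto
  show ?thesis using assms mB
    by (simp add: Cas_def T1 T2 T3 xm_K0 L4 algebra_simps power2_eq_square)
qed



lemma atLeastAtMost_insert_top: "(m::nat) \<ge> 1 \<Longrightarrow> {1..m} = insert m {1..m-1}"
  by auto

lemma CK_step:
  fixes q :: pfun and d :: real
  assumes q: "q \<in> P" and m: "m \<ge> 2" and z: "\<And>p. p \<ge> m \<Longrightarrow> pd p q = (\<lambda>x. 0)"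
    and e: "K0 \<nu> {1..m-1} q = (\<lambda>x. (d + (\<Sum>i\<in>{1..m-1}. \<nu> i)) * q x)"
  shows "\<And>p. p > m \<Longrightarrow> pd p (CK m q) = (\<lambda>x. 0)"
    and "K0 \<nu> {1..m} (CK m q) = (\<lambda>x. (d + (\<Sum>i\<in>{1..m}. \<nu> i)) * CK m q x)"
    and "Cas \<nu> {1..m} (CK m q) = (\<lambda>x. (d + (\<Sum>i\<in>{1..m}. \<nu> i)) * (-1 + d + (\<Sum>i\<in>{1..m}. \<nu> i)) * CK m q x)"
proof -
  show "\<And>p. p > m \<Longrightarrow> pd p (CK m q) = (\<lambda>x. 0)"
    using q z by (simp add: CK_chain)
  have zm: "pd m q = (\<lambda>x. 0)" using z by simp
  have ins: "{1..m} = insert m {1..m-1}" "m \<notin> {1..m-1}" using m by auto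
  have inr: "\<And>i. i \<in> {1..m-1} \<Longrightarrow> 1 \<le> i" "\<And>i. i \<in> {1..m-1} \<Longrightarrow> i \<le> m - 1" "\<And>i. i \<in> {1..m-1} \<Longrightarrow> i \<noteq> m" by auto
  have hp: "\<And>i. i \<in> {1..m-1} \<Longrightarrow> pd i (CK m q) = CK m (pd i q)"
    using q m by (intro pd_CK_in) auto
  have hs: "(\<Sum>i\<in>{1..m-1}. pd i (CK m q) x) = (\<Sum>i\<in>{1..m-1}. CK m (pd i q) x)" for x
    by (rule sum.cong[OF refl]) (simp add: hp)
  have hs2: "(\<Sum>i\<in>{1..m-1}. x i * pd i (CK m q) x) = (\<Sum>i\<in>{1..m-1}. x i * CK m (pd i q) x)" for x
    by (rule sum.cong[OF refl]) (simp add: hp)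
  have hm: "pd m (CK m q) = (\<lambda>x. - (\<Sum>i\<in>{1..m-1}. CK m (pd i q) x))"
    using q zm by (simp add: CK_chain)
  have Km: "Kminus {1..m} (CK m q) = (\<lambda>x. 0)"
    unfolding Kminus_def ins sum.insert[OF finite_atLeastAtMost ins(2)] hm hs by simp
  have E0: "(\<lambda>x. (\<Sum>i\<in>{1..m-1}. ee i q x)) = (\<lambda>x. d * q x)"
  proof
    fix x
    have "K0 \<nu> {1..m-1} q x = (d + (\<Sum>i\<in>{1..m-1}. \<nu> i)) * q x" using e by simp
    then show "(\<Sum>i\<in>{1..m-1}. ee i q x) = d * q x" unfolding K0_alt by (simp add: algebra_simps)
  qed
  have E1: "(\<Sum>i\<in>{1..m}. ee i (CK m q) x) = d * CK m q x" for x
  proof -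
    have "(\<Sum>i\<in>{1..m}. ee i (CK m q) x) = (\<Sum>i\<in>{1..m-1}. x i * CK m (pd i q) x) + x m * (- (\<Sum>i\<in>{1..m-1}. CK m (pd i q) x))"
      unfolding ins ee_def sum.insert[OF finite_atLeastAtMost ins(2)] hm hs2 by simp
    also have "\<dots> = (\<Sum>i\<in>{1..m-1}. (x i - x m) * CK m (pd i q) x)"
      by (simp add: algebra_simps sum_distrib_left sum_subtractf)
    also have "\<dots> = CK m (\<lambda>x. (\<Sum>i\<in>{1..m-1}. ee i q x)) x"
      by (simp add: ee_def) (rule sum.cong[OF refl], auto simp: CK_def)
    also have "\<dots> = d * CK m q x" unfolding E0 by simp
    finally show ?thesis .
  qed
  show K0e: "K0 \<nu> {1..m} (CK m q) = (\<lambda>x. (d + (\<Sum>i\<in>{1..m}. \<nu> i)) * CK m q x)"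
    unfolding K0_alt E1 by (simp add: algebra_simps)
  show "Cas \<nu> {1..m} (CK m q) = (\<lambda>x. (d + (\<Sum>i\<in>{1..m}. \<nu> i)) * (-1 + d + (\<Sum>i\<in>{1..m}. \<nu> i)) * CK m q x)"
    proof -
    let ?c = "d + (\<Sum>i\<in>{1..m}. \<nu> i)"
    have "K0 \<nu> {1..m} (\<lambda>x. ?c * CK m q x) = (\<lambda>x. ?c * K0 \<nu> {1..m} (CK m q) x)"
      using q by (intro K0_cmult) auto
    then have "K0 \<nu> {1..m} (K0 \<nu> {1..m} (CK m q)) = (\<lambda>x. ?c * (?c * CK m q x))"
      unfolding K0e .
    then show ?thesis unfolding Cas_def Km K0e by (simp add: algebra_simps)
  qed
qed



lemma Kp_step1:
  fixes lam :: "nat \<Rightarrow> real" and c :: real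
  assumes psi: "\<psi> \<in> P" and z: "\<And>p. p > m \<Longrightarrow> pd p \<psi> = (\<lambda>x. 0)"
    and e: "K0 \<nu> {1..m} \<psi> = (\<lambda>x. c * \<psi> x)"
    and C: "\<And>l. l \<in> {2..m} \<Longrightarrow> Cas \<nu> {1..l} \<psi> = (\<lambda>x. lam l * \<psi> x)"
    and p: "p > m"
  shows "pd p ((Kplus \<nu> {1..m} ^^ n) \<psi>) = (\<lambda>x. 0)"
  proof (induction n)
    case 0 then show ?case using z p by simp
  next
    case (Suc n)
    have "pd p ((Kplus \<nu> {1..m} ^^ Suc n) \<psi>) = Kplus \<nu> {1..m} (pd p ((Kplus \<nu> {1..m} ^^ n) \<psi>))"
      using psi p by (simp add: pd_Kplus_out)
    then show ?case using Suc by simp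
  qed

lemma Kp_step2:
  fixes lam :: "nat \<Rightarrow> real" and c :: real
  assumes psi: "\<psi> \<in> P" and z: "\<And>p. p > m \<Longrightarrow> pd p \<psi> = (\<lambda>x. 0)"
    and e: "K0 \<nu> {1..m} \<psi> = (\<lambda>x. c * \<psi> x)"
    and C: "\<And>l. l \<in> {2..m} \<Longrightarrow> Cas \<nu> {1..l} \<psi> = (\<lambda>x. lam l * \<psi> x)"
  shows "K0 \<nu> {1..m} ((Kplus \<nu> {1..m} ^^ n) \<psi>) = (\<lambda>x. (c + real n) * (Kplus \<nu> {1..m} ^^ n) \<psi> x)"
  proof (induction n)
    case 0 then show ?case using e by simp
  next
    case (Suc n)
    let ?g = "(Kplus \<nu> {1..m} ^^ n) \<psi>"
    have "K0 \<nu> {1..m} ((Kplus \<nu> {1..m} ^^ Suc n) \<psi>) = (\<lambda>x. Kplus \<nu> {1..m} (K0 \<nu> {1..m} ?g) x + Kplus \<nu> {1..m} ?g x)"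
      using psi by (simp add: L1)
    also have "\<dots> = (\<lambda>x. Kplus \<nu> {1..m} (\<lambda>x. (c + real n) * ?g x) x + Kplus \<nu> {1..m} ?g x)"
      unfolding Suc ..
    also have "\<dots> = (\<lambda>x. (c + real (Suc n)) * (Kplus \<nu> {1..m} ^^ Suc n) \<psi> x)"
      using psi by (simp add: algebra_simps)
    finally show ?case .
  qed

lemma Kp_step3:
  fixes lam :: "nat \<Rightarrow> real" and c :: real
  assumes psi: "\<psi> \<in> P" and z: "\<And>p. p > m \<Longrightarrow> pd p \<psi> = (\<lambda>x. 0)"
    and e: "K0 \<nu> {1..m} \<psi> = (\<lambda>x. c * \<psi> x)"
    and C: "\<And>l. l \<in> {2..m} \<Longrightarrow> Cas \<nu> {1..l} \<psi> = (\<lambda>x. lam l * \<psi> x)"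
    and l: "l \<in> {2..m}"
  shows "Cas \<nu> {1..l} ((Kplus \<nu> {1..m} ^^ n) \<psi>) = (\<lambda>x. lam l * (Kplus \<nu> {1..m} ^^ n) \<psi> x)"
  proof (induction n)
    case 0 then show ?case using C l by simp
  next
    case (Suc n)
    let ?g = "(Kplus \<nu> {1..m} ^^ n) \<psi>"
    have "Cas \<nu> {1..l} ((Kplus \<nu> {1..m} ^^ Suc n) \<psi>) = Kplus \<nu> {1..m} (Cas \<nu> {1..l} ?g)"
      using psi l by (simp add: Cas_Kplus)
    also have "\<dots> = Kplus \<nu> {1..m} (\<lambda>x. lam l * ?g x)" unfolding Suc ..
    also have "\<dots> = (\<lambda>x. lam l * (Kplus \<nu> {1..m} ^^ Suc n) \<psi> x)"
      using psi by simp
    finally show ?case .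
  qed


definition lam :: "(nat \<Rightarrow> real) \<Rightarrow> (nat \<Rightarrow> nat) \<Rightarrow> nat \<Rightarrow> real" where
  "lam \<nu> j l = ((\<Sum>i=1..l-1. real (j i)) + (\<Sum>i=1..l. \<nu> i)) * (-1 + (\<Sum>i=1..l-1. real (j i)) + (\<Sum>i=1..l. \<nu> i))"

lemma pow_pred: "n > 0 \<Longrightarrow> (y::real) * y ^ (n - Suc 0) = y ^ n"
  by (cases n) auto

lemma base_facts:
  shows "(\<lambda>x. (x 1) ^ n) \<in> P"
    and "\<And>p. p \<ge> 2 \<Longrightarrow> pd p (\<lambda>x. (x 1) ^ n) = (\<lambda>x. 0)"
    and "K0 \<nu> {1..2-1} (\<lambda>x. (x 1) ^ n) = (\<lambda>x. (real n + (\<Sum>i\<in>{1..2-1}. \<nu> i)) * (x 1) ^ n)"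
proof -
  show "(\<lambda>x. (x 1) ^ n) \<in> P" by auto
  show "\<And>p. p \<ge> 2 \<Longrightarrow> pd p (\<lambda>x. (x 1) ^ n) = (\<lambda>x. 0)" by (simp add: pd_pow)
  show "K0 \<nu> {1..2-1} (\<lambda>x. (x 1) ^ n) = (\<lambda>x. (real n + (\<Sum>i\<in>{1..2-1}. \<nu> i)) * (x 1) ^ n)"
    by (cases "n = 0") (auto simp: K0_alt ee_def pd_pow pow_pred distrib_left mult_ac intro!: ext)
qed

lemma main:
  "psiS \<nu> j r \<in> P \<and> (\<forall>p. p > r + 2 \<longrightarrow> pd p (psiS \<nu> j r) = (\<lambda>x. 0))
   \<and> K0 \<nu> {1..r+2} (psiS \<nu> j r) = (\<lambda>x. ((\<Sum>i=1..r+1. real (j i)) + (\<Sum>i=1..r+2. \<nu> i)) * psiS \<nu> j r x)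
   \<and> (\<forall>l\<in>{2..r+2}. Cas \<nu> {1..l} (psiS \<nu> j r) = (\<lambda>x. lam \<nu> j l * psiS \<nu> j r x))"
proof (induction r)
  case 0
  note b = base_facts[where n="j 1"]
  note s = CK_step[OF b(1) order_refl b(2) b(3)]
  have A: "psiS \<nu> j 0 = CK 2 (\<lambda>x. x 1 ^ j 1)" by simp
  show ?case unfolding A add_0
  proof (intro conjI)
    show "CK 2 (\<lambda>x. x 1 ^ j 1) \<in> P" by auto
    show "\<forall>p>2. pd p (CK 2 (\<lambda>x. x 1 ^ j 1)) = (\<lambda>x. 0)" using s(1) by auto
    show "K0 \<nu> {1..2} (CK 2 (\<lambda>x. x 1 ^ j 1)) = (\<lambda>x. ((\<Sum>i = 1..1. real (j i)) + sum \<nu> {1..2}) * CK 2 (\<lambda>x. x 1 ^ j 1) x)"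
      using s(2) by simp
    show "\<forall>l\<in>{2..2}. Cas \<nu> {1..l} (CK 2 (\<lambda>x. x 1 ^ j 1)) = (\<lambda>x. lam \<nu> j l * CK 2 (\<lambda>x. x 1 ^ j 1) x)"
    proof
      fix l :: nat assume "l \<in> {2..2}"
      then have "l = 2" by auto
      then show "Cas \<nu> {1..l} (CK 2 (\<lambda>x. x 1 ^ j 1)) = (\<lambda>x. lam \<nu> j l * CK 2 (\<lambda>x. x 1 ^ j 1) x)"
        using s(3) by (simp add: lam_def)
    qed
  qed
next
  case (Suc r)
  let ?B = "{1..r+2}"
  let ?q = "(Kplus \<nu> ?B ^^ j (r+2)) (psiS \<nu> j r)"
  have psi: "psiS \<nu> j r \<in> P" using Suc by blast
  have z: "\<And>p. p > r + 2 \<Longrightarrow> pd p (psiS \<nu> j r) = (\<lambda>x. 0)" using Suc by blast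
  have e: "K0 \<nu> ?B (psiS \<nu> j r) = (\<lambda>x. ((\<Sum>i=1..r+1. real (j i)) + (\<Sum>i=1..r+2. \<nu> i)) * psiS \<nu> j r x)"
    using Suc by blast
  have C: "\<And>l. l \<in> {2..r+2} \<Longrightarrow> Cas \<nu> {1..l} (psiS \<nu> j r) = (\<lambda>x. lam \<nu> j l * psiS \<nu> j r x)"
    using Suc by blast
  note k1 = Kp_step1[OF psi z e C, where n="j (r+2)"]
  note k2 = Kp_step2[OF psi z e C, where n="j (r+2)"]
  have qP: "?q \<in> P" using psi by auto
  have sumj: "(\<Sum>i=1..r+2. real (j i)) = (\<Sum>i=1..r+1. real (j i)) + real (j (r+2))"
    by simp
  have zq: "\<And>p. p \<ge> r + 3 \<Longrightarrow> pd p ?q = (\<lambda>x. 0)" using k1 by auto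
  have eq: "K0 \<nu> {1..r+3-1} ?q = (\<lambda>x. ((\<Sum>i=1..r+2. real (j i)) + (\<Sum>i\<in>{1..r+3-1}. \<nu> i)) * ?q x)"
    using k2 by (simp add: sumj algebra_simps)
  have m3: "2 \<le> r + 3" by simp
  note s = CK_step[OF qP m3 zq eq]
  have ps: "psiS \<nu> j (Suc r) = CK (r+3) ?q" by simp
  show ?case
  proof (intro conjI)
    show "psiS \<nu> j (Suc r) \<in> P" using qP ps by auto
    show "\<forall>p. p > Suc r + 2 \<longrightarrow> pd p (psiS \<nu> j (Suc r)) = (\<lambda>x. 0)"
      using s(1) ps by auto
    show "K0 \<nu> {1..Suc r+2} (psiS \<nu> j (Suc r)) = (\<lambda>x. ((\<Sum>i=1..Suc r+1. real (j i)) + (\<Sum>i=1..Suc r+2. \<nu> i)) * psiS \<nu> j (Suc r) x)"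
    proof -
      have t1: "Suc r + 2 = r + 3" "Suc r + 1 = r + 2" by simp_all
      show ?thesis unfolding t1 ps by (rule s(2))
    qed
    show "\<forall>l\<in>{2..Suc r+2}. Cas \<nu> {1..l} (psiS \<nu> j (Suc r)) = (\<lambda>x. lam \<nu> j l * psiS \<nu> j (Suc r) x)"
    proof
      fix l assume l: "l \<in> {2..Suc r+2}"
      show "Cas \<nu> {1..l} (psiS \<nu> j (Suc r)) = (\<lambda>x. lam \<nu> j l * psiS \<nu> j (Suc r) x)"
      proof (cases "l = r + 3")
        case True
        have t2: "r + 3 - 1 = r + 2" by simp
        show ?thesis unfolding True ps lam_def t2 using s(3) by simp
      next
        case False
        then have l': "l \<in> {2..r+2}" using l by auto
        have "Cas \<nu> {1..l} (CK (r+3) ?q) = CK (r+3) (Cas \<nu> {1..l} ?q)"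
          using qP l' by (intro Cas_CK) auto
        also have "\<dots> = CK (r+3) (\<lambda>x. lam \<nu> j l * ?q x)" using Kp_step3[OF psi z e C l', where n="j (r+2)"] by simp
        also have "\<dots> = (\<lambda>x. lam \<nu> j l * CK (r+3) ?q x)" by simp
        finally show ?thesis using ps by simp
      qed
    qed
  qed
qed


theorem theorem3p4:
  fixes n k :: nat and \<nu> :: "nat \<Rightarrow> real" and j :: "nat \<Rightarrow> nat"
  assumes "n \<ge> 2"
    and "\<forall>i\<in>{1..n}. \<nu> i > 0"
    and "(\<Sum>i=1..n-1. j i) = k"
  shows "\<forall>l\<in>{2..n}.
    Cas \<nu> {1..l} (psiS \<nu> j (n - 2)) =
      (\<lambda>x. ((\<Sum>i=1..l-1. real (j i)) + (\<Sum>i=1..l. \<nu> i))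
          * (-1 + (\<Sum>i=1..l-1. real (j i)) + (\<Sum>i=1..l. \<nu> i))
          * psiS \<nu> j (n - 2) x)"
proof -
  have nn: "n - 2 + 2 = n" using assms(1) by simp
  have "\<forall>l\<in>{2..n - 2 + 2}. Cas \<nu> {1..l} (psiS \<nu> j (n - 2)) = (\<lambda>x. lam \<nu> j l * psiS \<nu> j (n - 2) x)"
    using main[of \<nu> j "n - 2"] by blast
  then show ?thesis unfolding nn lam_def .
qed

end
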